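(* Let $R$ be a route. Then $$\operatorname{conv}(\Pi(R))=\Big\{y\in\mathbb{R}^{[N]\times V_+}_{\ge 0}:\ y^\xi(R')\ge k_\xi(R')-1\ \text{ for all subroutes } R'\subseteq R \text{ and all } \xi\in[N]\Big\}.$$
   Context: $G=(V,E)$ is a complete undirected graph with $V=\{0\}\cup V_+$ ($0$ is the depot, $V_+$ the set of customers); $D=(V,A)$ is the digraph obtained by replacing each edge by two opposite arcs. $C\in\mathbb{Q}_{>0}$ is the vehicle capacity. There are $N$ scenarios $\xi\in[N]=\{1,\dots,N\}$, each with a demand vector $d^\xi\in\mathbb{Q}_{\ge 0}^{V_+}$ and probability $p_\xi\in[0,1]\cap\mathbb{Q}$, $\sum_\xi p_\xi=1$; it is assumed that $d^\xi(v)\le C$ for all $\xi\in[N]$, $v\in V_+$. For a vector $f$ and set $S$ of its coordinates, $f(S)=\sum_{i\in S}f(i)$; $k_\xi(S)=\lceil d^\xi(S)/C\rceil$. A route $R=(v_1,\dots,v_\ell)$ ($\ell\ge 1$, distinct customers $v_i\in V_+$) is the cycle $0,v_1,\dots,v_\ell,0$; $V_+(R)=\{v_1,\dots,v_\ell\}$ and $v_0=v_{\ell+1}=0$. A subroute of $R$ is a route $R'=(v_i,\dots,v_j)$ with $1\le i\le j\le \ell$, written $R'\subseteq R$. Vectors $y\in\mathbb{R}^{[N]\times V_+}$ have entries $y^\xi_v$; $y^\xi\in\mathbb{R}^{V_+}$ is the restriction to scenario $\xi$; $y^\xi(R')=y^\xi(V_+(R'))$, $k_\xi(R')=k_\xi(V_+(R'))$.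 For a route $R=(v_1,\dots,v_\ell)$ and $\xi\in[N]$, a recourse action is an integer vector $y^\xi\in\mathbb{Z}^{V_+}_{\ge 0}$ for which there exist $f\in\mathbb{R}^{A}_{\ge 0}$ and $g\in\mathbb{R}^{V_+}_{\ge 0}$ with $f_{(v_{i-1},v_i)}+d^\xi(v_i)=f_{(v_i,v_{i+1})}+g_{v_i}$ for all $i\in[\ell]$, $f_{(v_{i-1},v_i)}\le C$ for all $i\in[\ell+1]$, and $g_{v_i}\le C\,y^\xi_{v_i}$ for all $i\in[\ell]$. The set of recourse actions is $\mathcal{Y}^\xi(R)$, and the set of recourse policies is $\Pi(R)=\mathcal{Y}^1(R)\times\cdots\times\mathcal{Y}^N(R)\subseteq\mathbb{Z}^{[N]\times V_+}$. *)

theory Defs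
  imports "HOL-Analysis.Analysis"
begin

text \<open>Vertices: the depot 0 is None, customer v is Some v (customers of type 'v).
  Scenario vectors y in R^([N] x V+) are functions nat => 'v => real, scenario indices 1..N;
  outside [N] x V+ they are required to be 0.\<close>

definition arcs :: "'v set \<Rightarrow> ('v option \<times> 'v option) set" where
  "arcs Vp = {(u, w). u \<in> insert None (Some ` Vp) \<and> w \<in> insert None (Some ` Vp) \<and> u \<noteq> w}"

definition is_route :: "'v set \<Rightarrow> 'v list \<Rightarrow> bool" where
  "is_route Vp R \<longleftrightarrow> R \<noteq> [] \<and> distinct R \<and> set R \<subseteq> Vp"

text \<open>The i-th vertex v_i of the cycle 0,v_1,...,v_l,0 (v_0 = v_(l+1) = depot).\<close>
definition rvert :: "'v list \<Rightarrow> nat \<Rightarrow> 'v option" where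
  "rvert R i = (if 1 \<le> i \<and> i \<le> length R then Some (R ! (i - 1)) else None)"

definition subroutes :: "'v list \<Rightarrow> 'v list set" where
  "subroutes R = {drop (i - 1) (take j R) | i j. 1 \<le> i \<and> i \<le> j \<and> j \<le> length R}"

definition kcap :: "real \<Rightarrow> ('v \<Rightarrow> real) \<Rightarrow> 'v set \<Rightarrow> int" where
  "kcap C d S = \<lceil>sum d S / C\<rceil>"

definition recourse_actions :: "'v set \<Rightarrow> real \<Rightarrow> ('v \<Rightarrow> real) \<Rightarrow> 'v list \<Rightarrow> ('v \<Rightarrow> real) set" where
  "recourse_actions Vp C d R =
     {y. (\<forall>v\<in>Vp. y v \<in> \<int> \<and> y v \<ge> 0) \<and>
        (\<exists>f g. (\<forall>a\<in>arcs Vp. f a \<ge> 0) \<and> (\<forall>v\<in>Vp. g v \<ge> 0) \<and>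
          (\<forall>i\<in>{1..length R}. f (rvert R (i - 1), rvert R i) + d (R ! (i - 1))
                               = f (rvert R i, rvert R (i + 1)) + g (R ! (i - 1))) \<and>
          (\<forall>i\<in>{1..length R + 1}. f (rvert R (i - 1), rvert R i) \<le> C) \<and>
          (\<forall>i\<in>{1..length R}. g (R ! (i - 1)) \<le> C * y (R ! (i - 1))))}"

definition policies :: "nat \<Rightarrow> 'v set \<Rightarrow> real \<Rightarrow> (nat \<Rightarrow> 'v \<Rightarrow> real) \<Rightarrow> 'v list
     \<Rightarrow> (nat \<Rightarrow> 'v \<Rightarrow> real) set" where
  "policies N Vp C d R =
     {y. (\<forall>\<xi> v. (\<xi> \<notin> {1..N} \<or> v \<notin> Vp) \<longrightarrow> y \<xi> v = 0) \<and>
         (\<forall>\<xi>\<in>{1..N}. y \<xi> \<in> recourse_actions Vp C (d \<xi>) R)}"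

definition conv :: "(nat \<Rightarrow> 'v \<Rightarrow> real) set \<Rightarrow> (nat \<Rightarrow> 'v \<Rightarrow> real) set" where
  "conv S = {y. \<exists>(m::nat) c p. (\<forall>i<m. c i \<ge> 0 \<and> p i \<in> S) \<and> (\<Sum>i<m. c i) = 1 \<and>
                  y = (\<lambda>\<xi> v. \<Sum>i<m. c i * p i \<xi> v)}"

end

theory Submission
  imports Defs
begin

lemma sub_set: "j \<le> length R \<Longrightarrow> set (drop a (take j R)) = (\<lambda>q. R!q) ` {a..<j}"
proof (rule set_eqI)
  fix x assume j: "j \<le> length R"
  show "x \<in> set (drop a (take j R)) \<longleftrightarrow> x \<in> (\<lambda>q. R!q) ` {a..<j}"
  proof
    assume "x \<in> set (drop a (take j R))"
    then obtain i where "i < length (drop a (take j R))" "x = drop a (take j R) ! i" by (auto simp: in_set_conv_nth)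
    then have i: "i < j - a" "x = R ! (a + i)" using j by auto
    then show "x \<in> (\<lambda>q. R!q) ` {a..<j}" by (intro image_eqI[where x="a+i"]) auto
  next
    assume "x \<in> (\<lambda>q. R!q) ` {a..<j}"
    then obtain q where q: "a \<le> q" "q < j" "x = R!q" by auto
    then have "drop a (take j R) ! (q - a) = x" using j by (simp add: nth_drop nth_take)
    moreover have "q - a < length (drop a (take j R))" using q j by auto
    ultimately show "x \<in> set (drop a (take j R))" by (metis nth_mem)
  qed
qed

lemma sum_sub: "distinct R \<Longrightarrow> j \<le> length R \<Longrightarrow> sum h (set (drop a (take j R))) = (\<Sum>q\<in>{a..<j}. h (R!q))"
proof -
  assume d: "distinct R" and j: "j \<le> length R"
  have "inj_on (\<lambda>q. R!q) {a..<j}" using d j by (intro inj_on_nth) auto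
  then show ?thesis using j by (simp add: sub_set sum.reindex)
qed

lemma subroutes_iff: "R' \<in> subroutes R \<longleftrightarrow> (\<exists>a j. a < j \<and> j \<le> length R \<and> R' = drop a (take j R))"
proof
  assume "R' \<in> subroutes R"
  then obtain i j where "1 \<le> i" "i \<le> j" "j \<le> length R" "R' = drop (i - 1) (take j R)" unfolding subroutes_def by blast
  then show "\<exists>a j. a < j \<and> j \<le> length R \<and> R' = drop a (take j R)" by (intro exI[of _ "i - 1"] exI[of _ j]) auto
next
  assume "\<exists>a j. a < j \<and> j \<le> length R \<and> R' = drop a (take j R)"
  then obtain a j where "a < j" "j \<le> length R" "R' = drop a (take j R)" by blast
  then show "R' \<in> subroutes R" unfolding subroutes_def by (intro CollectI exI[of _ "Suc a"] exI[of _ j]) auto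
qed

lemma sum_ivl_diff: "(a::nat) \<le> j \<Longrightarrow> (\<Sum>q\<in>{a..<j}. h q) = (\<Sum>q<j. h q) - (\<Sum>q<a. (h q::real))"
proof -
  assume "a \<le> j"
  then have e: "{..<j} = {..<a} \<union> {a..<j}" by auto
  have "sum h {..<j} = sum h {..<a} + sum h {a..<j}" unfolding e by (rule sum.union_disjoint) auto
  then show ?thesis by simp
qed

definition idx :: "'v list \<Rightarrow> 'v \<Rightarrow> nat" where
  "idx R v = (THE k. k < length R \<and> R!k = v)"

lemma idx_nth: "distinct R \<Longrightarrow> q < length R \<Longrightarrow> idx R (R!q) = q"
  unfolding idx_def by (rule the_equality) (auto simp: nth_eq_iff_index_eq)

lemma rvert0[simp]: "rvert R 0 = None"
  by (simp add: rvert_def)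

lemma rvert_Suc: "q < length R \<Longrightarrow> rvert R (Suc q) = Some (R!q)"
  by (simp add: rvert_def)

lemma rvert_big: "length R < i \<Longrightarrow> rvert R i = None"
  by (simp add: rvert_def)

lemma arc_in:
  assumes "distinct R" "set R \<subseteq> Vp" "R \<noteq> []" "q \<le> length R"
  shows "(rvert R q, rvert R (Suc q)) \<in> arcs Vp"
proof -
  have inV: "rvert R i \<in> insert None (Some ` Vp)" for i
    using assms(2) by (auto simp: rvert_def intro!: imageI nth_mem)
  have ne: "rvert R q \<noteq> rvert R (Suc q)"
  proof (cases q)
    case 0 then show ?thesis using assms(3) by (simp add: rvert_Suc)
  next
    case (Suc q')
    show ?thesis
    proof (cases "q = length R")
      case True then show ?thesis using Suc rvert_Suc[of q' R] by (simp add: rvert_big)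
    next
      case False
      then have "q < length R" using assms(4) by simp
      then show ?thesis using Suc assms(1) by (simp add: rvert_Suc nth_eq_iff_index_eq)
    qed
  qed
  show ?thesis using inV ne unfolding arcs_def by auto
qed

lemma nec:
  assumes "distinct R" "set R \<subseteq> Vp" "R \<noteq> []" "z \<in> recourse_actions Vp C d R"
    and "a < j" "j \<le> length R"
  shows "(\<Sum>q\<in>{a..<j}. d (R!q)) \<le> C + C * (\<Sum>q\<in>{a..<j}. z (R!q))"
proof -
  obtain f g where f0: "\<forall>a\<in>arcs Vp. f a \<ge> 0" and g0: "\<forall>v\<in>Vp. g v \<ge> 0"
    and eq: "\<forall>i\<in>{1..length R}. f (rvert R (i - 1), rvert R i) + d (R ! (i - 1))
                               = f (rvert R i, rvert R (i + 1)) + g (R ! (i - 1))"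
    and fC: "\<forall>i\<in>{1..length R + 1}. f (rvert R (i - 1), rvert R i) \<le> C"
    and gC: "\<forall>i\<in>{1..length R}. g (R ! (i - 1)) \<le> C * z (R ! (i - 1))"
    using assms(4) unfolding recourse_actions_def by blast
  define F where "F q = f (rvert R q, rvert R (Suc q))" for q
  have eq': "d (R!q) = F (Suc q) - F q + g (R!q)" if "q < length R" for q
    using eq[rule_format, of "Suc q"] that by (simp add: F_def)
  have gC': "g (R!q) \<le> C * z (R!q)" if "q < length R" for q
    using gC[rule_format, of "Suc q"] that by simp
  have Fa: "F a \<ge> 0" unfolding F_def using f0 arc_in[OF assms(1-3), of a] assms(5,6) by auto
  have Fj: "F j \<le> C" unfolding F_def using fC[rule_format, of "Suc j"] assms(6) by simp
  have "(\<Sum>q\<in>{a..<j}. d (R!q)) = (\<Sum>q\<in>{a..<j}. F (Suc q) - F q) + (\<Sum>q\<in>{a..<j}. g (R!q))"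
    using assms(6) by (simp add: eq' sum.distrib)
  also have "\<dots> = F j - F a + (\<Sum>q\<in>{a..<j}. g (R!q))"
    using assms(5) by (simp add: sum_Suc_diff')
  also have "(\<Sum>q\<in>{a..<j}. g (R!q)) \<le> (\<Sum>q\<in>{a..<j}. C * z (R!q))"
    using assms(6) by (intro sum_mono gC') auto
  finally show ?thesis using Fa Fj by (simp add: sum_distrib_left)
qed

fun Lw :: "real \<Rightarrow> ('v \<Rightarrow> real) \<Rightarrow> ('v \<Rightarrow> real) \<Rightarrow> 'v list \<Rightarrow> nat \<Rightarrow> real" where
  "Lw C d z R 0 = 0"
| "Lw C d z R (Suc q) = max 0 (Lw C d z R q + d (R!q) - C * z (R!q))"

lemma Lw_nonneg: "Lw C d z R q \<ge> 0"
  by (cases q) auto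

lemma Lw_lindley: "Lw C d z R q = 0 \<or> (\<exists>a<q. Lw C d z R q = (\<Sum>s\<in>{a..<q}. d (R!s) - C * z (R!s)))"
proof (induction q)
  case 0 then show ?case by simp
next
  case (Suc q)
  let ?e = "\<lambda>s. d (R!s) - C * z (R!s)"
  show ?case
  proof (cases "Lw C d z R q + d (R!q) - C * z (R!q) \<le> 0")
    case True then show ?thesis by simp
  next
    case False
    then have L: "Lw C d z R (Suc q) = Lw C d z R q + ?e q" by simp
    from Suc.IH show ?thesis
    proof
      assume "Lw C d z R q = 0"
      then show ?thesis using L by (intro disjI2 exI[of _ q]) simp
    next
      assume "\<exists>a<q. Lw C d z R q = (\<Sum>s\<in>{a..<q}. ?e s)"
      then obtain a where "a < q" "Lw C d z R q = (\<Sum>s\<in>{a..<q}. ?e s)" by blast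
      then show ?thesis using L by (intro disjI2 exI[of _ a]) simp
    qed
  qed
qed

lemma suf:
  fixes R :: "'v list" and Vp :: "'v set"
  assumes dR: "distinct R" and sR: "set R \<subseteq> Vp" and C0: "C > 0"
    and d0: "\<forall>v\<in>Vp. 0 \<le> d v" and zZ: "\<forall>v\<in>Vp. z v \<in> \<int> \<and> z v \<ge> 0"
    and cond: "\<forall>a j. a < j \<longrightarrow> j \<le> length R \<longrightarrow>
        (\<Sum>q\<in>{a..<j}. d (R!q)) \<le> C + C * (\<Sum>q\<in>{a..<j}. z (R!q))"
  shows "z \<in> recourse_actions Vp C d R"
proof -
  let ?L = "Lw C d z R"
  define f :: "'v option \<times> 'v option \<Rightarrow> real" where "f = (\<lambda>pr. case fst pr of None \<Rightarrow> 0 | Some v \<Rightarrow> ?L (Suc (idx R v)))"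
  define g where "g = (\<lambda>v. if v \<in> set R then ?L (idx R v) + d v - ?L (Suc (idx R v)) else 0)"
  have F: "f (rvert R q, w) = ?L q" if "q \<le> length R" for q w
  proof (cases q)
    case 0 then show ?thesis by (simp add: f_def)
  next
    case (Suc q')
    then have "q' < length R" using that by simp
    then show ?thesis using Suc by (simp add: f_def rvert_Suc idx_nth[OF dR])
  qed
  have g: "g (R!q) = ?L q + d (R!q) - ?L (Suc q)" if "q < length R" for q
    using that by (simp add: g_def idx_nth[OF dR])
  have Rin: "R!q \<in> Vp" if "q < length R" for q using that sR nth_mem by blast
  have LC: "?L q \<le> C" if "q \<le> length R" for q
  proof -
    from Lw_lindley[of C d z R q] show ?thesis
    proof
      assume "?L q = 0" then show ?thesis using C0 by simp
    next
      assume "\<exists>a<q. ?L q = (\<Sum>s\<in>{a..<q}. d (R!s) - C * z (R!s))"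
      then obtain a where a: "a < q" "?L q = (\<Sum>s\<in>{a..<q}. d (R!s) - C * z (R!s))" by blast
      have "?L q = (\<Sum>s\<in>{a..<q}. d (R!s)) - C * (\<Sum>s\<in>{a..<q}. z (R!s))"
        using a(2) by (simp add: sum_subtractf sum_distrib_left)
      then show ?thesis using cond a(1) that by force
    qed
  qed
  have step_le: "?L (Suc q) \<le> ?L q + d (R!q)" if "q < length R" for q
  proof -
    have "0 \<le> d (R!q)" "0 \<le> z (R!q)" using d0 zZ Rin[OF that] by auto
    then show ?thesis using Lw_nonneg[of C d z R q] C0 by (simp add: max_def)
  qed
  show ?thesis unfolding recourse_actions_def
  proof (intro CollectI conjI exI[of _ f] exI[of _ g])
    show "\<forall>v\<in>Vp. z v \<in> \<int> \<and> 0 \<le> z v" using zZ by blast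
    show "\<forall>a\<in>arcs Vp. 0 \<le> f a" by (auto simp: f_def Lw_nonneg split: option.split)
    show "\<forall>v\<in>Vp. 0 \<le> g v"
    proof
      fix v assume "v \<in> Vp"
      show "0 \<le> g v"
      proof (cases "v \<in> set R")
        case True
        then obtain q where q: "q < length R" "v = R!q" by (auto simp: in_set_conv_nth)
        then show ?thesis using g[OF q(1)] step_le[OF q(1)] by simp
      qed (simp add: g_def)
    qed
    show "\<forall>i\<in>{1..length R}. f (rvert R (i - 1), rvert R i) + d (R ! (i - 1))
                               = f (rvert R i, rvert R (i + 1)) + g (R ! (i - 1))"
    proof
      fix i assume i: "i \<in> {1..length R}"
      then obtain q where q: "i = Suc q" "q < length R" by (cases i) auto
      show "f (rvert R (i - 1), rvert R i) + d (R ! (i - 1))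
                               = f (rvert R i, rvert R (i + 1)) + g (R ! (i - 1))"
        using q F[of q] F[of "Suc q"] g[OF q(2)] by simp
    qed
    show "\<forall>i\<in>{1..length R + 1}. f (rvert R (i - 1), rvert R i) \<le> C"
    proof
      fix i assume i: "i \<in> {1..length R + 1}"
      then obtain q where q: "i = Suc q" "q \<le> length R" by (cases i) auto
      show "f (rvert R (i - 1), rvert R i) \<le> C" using q F[of q] LC[of q] by simp
    qed
    show "\<forall>i\<in>{1..length R}. g (R ! (i - 1)) \<le> C * z (R ! (i - 1))"
    proof
      fix i assume i: "i \<in> {1..length R}"
      then obtain q where q: "i = Suc q" "q < length R" by (cases i) auto
      have "?L (Suc q) \<ge> ?L q + d (R!q) - C * z (R!q)" by simp
      then show "g (R ! (i - 1)) \<le> C * z (R ! (i - 1))" using q g[OF q(2)] by simp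
    qed
  qed
qed


definition nxt :: "real set \<Rightarrow> real \<Rightarrow> real" where
  "nxt T t = Min (insert 1 {s\<in>T. t < s})"

lemma K1_aux:
  assumes fin: "finite T" and T01: "T \<subseteq> {0..<1}" and T0: "0 \<in> T"
  shows "card {t\<in>T. t < f} = n \<Longrightarrow> f \<in> insert 1 T \<Longrightarrow> (\<Sum>t\<in>{t\<in>T. t < f}. nxt T t - t) = f"
proof (induction n arbitrary: f rule: less_induct)
  case (less n)
  have f01: "0 \<le> f" "f \<le> 1" using less.prems(2) T01 by auto
  show ?case
  proof (cases "f = 0")
    case True
    then have "{t\<in>T. t < f} = {}" using T01 by auto
    then show ?thesis using True by (simp only: sum.empty)
  next
    case False
    define A where "A = {t\<in>T. t < f}"
    have finA: "finite A" using fin by (simp add: A_def)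
    have "0 \<in> A" using T0 False f01 by (simp add: A_def)
    then have neA: "A \<noteq> {}" by auto
    define g where "g = Max A"
    have gA: "g \<in> A" using finA neA by (simp add: g_def)
    have gmax: "t \<le> g" if "t \<in> A" for t using finA that by (simp add: g_def)
    have gT: "g \<in> T" "g < f" using gA by (auto simp: A_def)
    have nx: "nxt T g = f"
      unfolding nxt_def
    proof (rule Min_eqI)
      show "finite (insert 1 {s \<in> T. g < s})" using fin by simp
      show "f \<in> insert 1 {s \<in> T. g < s}" using less.prems(2) gT by auto
      fix s assume "s \<in> insert 1 {s \<in> T. g < s}"
      then show "f \<le> s"
      proof
        assume "s = 1" then show ?thesis using f01 by simp
      next
        assume "s \<in> {s \<in> T. g < s}"
        then have "s \<in> T" "g < s" by auto
        then show ?thesis using gmax[of s] by (force simp: A_def)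
      qed
    qed
    have Aeq: "A = insert g {t\<in>T. t < g}"
    proof (rule set_eqI)
      fix t show "t \<in> A \<longleftrightarrow> t \<in> insert g {t\<in>T. t < g}"
      proof
        assume tA: "t \<in> A"
        then have "t \<le> g" by (rule gmax)
        then show "t \<in> insert g {t\<in>T. t < g}" using tA by (cases "t = g") (auto simp: A_def)
      next
        assume "t \<in> insert g {t\<in>T. t < g}"
        then show "t \<in> A" using gA gT by (auto simp: A_def)
      qed
    qed
    have sub: "{t\<in>T. t < g} \<subset> A" using Aeq by auto
    have "card {t\<in>T. t < g} < n" using psubset_card_mono[OF finA sub] less.prems(1) by (simp add: A_def)
    then have IH: "(\<Sum>t\<in>{t\<in>T. t < g}. nxt T t - t) = g"
      using less.IH gT by blast
    have "(\<Sum>t\<in>A. nxt T t - t) = (nxt T g - g) + (\<Sum>t\<in>{t\<in>T. t < g}. nxt T t - t)"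
      unfolding Aeq using fin by (subst sum.insert) auto
    then show ?thesis using IH nx by (simp add: A_def)
  qed
qed

lemma K1:
  assumes "finite T" "T \<subseteq> {0..<1}" "0 \<in> T" "f \<in> insert 1 T"
  shows "(\<Sum>t\<in>{t\<in>T. t < f}. nxt T t - t) = f"
  using K1_aux[OF assms(1-3) refl assms(4)] .

lemma nxt_ge:
  assumes "finite T" "T \<subseteq> {0..<1}" "t \<in> T"
  shows "t < nxt T t"
proof -
  have "\<forall>s\<in>insert 1 {s\<in>T. t < s}. t < s" using assms by auto
  then show ?thesis unfolding nxt_def using assms(1) by (subst Min_gr_iff) auto
qed

lemma ceil_shift:
  assumes "0 \<le> t" "t < 1"
  shows "\<lceil>x - t\<rceil> = \<lfloor>x\<rfloor> + (if t < frac x then 1 else 0)"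
proof -
  have fr: "frac x = x - of_int \<lfloor>x\<rfloor>" "0 \<le> frac x" "frac x < 1" by (simp_all add: frac_def frac_lt_1[of x, unfolded frac_def])
  show ?thesis
  proof (cases "t < frac x")
    case True
    have "of_int (\<lfloor>x\<rfloor> + 1) - 1 < x - t" "x - t \<le> of_int (\<lfloor>x\<rfloor> + 1)"
      unfolding of_int_add of_int_1 using fr assms True by linarith+
    then have "\<lceil>x - t\<rceil> = \<lfloor>x\<rfloor> + 1" by (rule ceiling_unique)
    then show ?thesis using True by simp
  next
    case False
    have "of_int (\<lfloor>x\<rfloor>) - 1 < x - t" "x - t \<le> of_int (\<lfloor>x\<rfloor>)"
      using fr assms False by linarith+
    then have "\<lceil>x - t\<rceil> = \<lfloor>x\<rfloor>" by (rule ceiling_unique)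
    then show ?thesis using False by simp
  qed
qed

lemma K2:
  assumes fin: "finite T" and T01: "T \<subseteq> {0..<1}" and T0: "0 \<in> T" and fx: "frac x \<in> T"
  shows "(\<Sum>t\<in>T. (nxt T t - t) * of_int \<lceil>x - t\<rceil>) = x"
proof -
  have "(\<Sum>t\<in>T. (nxt T t - t) * of_int \<lceil>x - t\<rceil>)
      = (\<Sum>t\<in>T. of_int \<lfloor>x\<rfloor> * (nxt T t - t) + (if t < frac x then nxt T t - t else 0))"
  proof (rule sum.cong)
    fix t assume "t \<in> T"
    then have "0 \<le> t" "t < 1" using T01 by auto
    then show "(nxt T t - t) * of_int \<lceil>x - t\<rceil> = of_int \<lfloor>x\<rfloor> * (nxt T t - t) + (if t < frac x then nxt T t - t else 0)"
      by (simp add: ceil_shift algebra_simps)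
  qed simp
  also have "\<dots> = of_int \<lfloor>x\<rfloor> * (\<Sum>t\<in>T. nxt T t - t) + (\<Sum>t\<in>{t\<in>T. t < frac x}. nxt T t - t)"
    using fin by (simp add: sum.distrib sum_distrib_left sum.inter_filter)
  also have "(\<Sum>t\<in>T. nxt T t - t) = 1"
  proof -
    have "{t\<in>T. t < 1} = T" using T01 by auto
    then show ?thesis using K1[OF fin T01 T0, of 1] by simp
  qed
  also have "(\<Sum>t\<in>{t\<in>T. t < frac x}. nxt T t - t) = frac x"
    using K1[OF fin T01 T0, of "frac x"] fx by simp
  finally show ?thesis by (simp add: frac_def)
qed


lemma K1sum:
  assumes "finite T" "T \<subseteq> {0..<1}" "0 \<in> T"
  shows "(\<Sum>t\<in>T. nxt T t - t) = 1"
proof -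
  have "{t\<in>T. t < 1} = T" using assms(2) by auto
  then show ?thesis using K1[OF assms, of 1] by simp
qed

lemma kcap_int:
  assumes C0: "C > 0" and Y: "Y = of_int n" and le: "sum d A \<le> C + C * Y"
  shows "of_int (kcap C d A) - 1 \<le> Y"
proof -
  have "sum d A / C \<le> of_int (n + 1)" using le C0 Y by (simp add: pos_divide_le_eq algebra_simps)
  then have "kcap C d A \<le> n + 1" unfolding kcap_def by (rule ceiling_le)
  then show ?thesis using Y by simp
qed

lemma kcap_back:
  assumes C0: "C > 0" and K: "of_int (kcap C d A) - 1 \<le> W"
  shows "sum d A \<le> C + C * W"
proof -
  have "sum d A / C \<le> of_int (kcap C d A)" unfolding kcap_def by simp
  then have "sum d A / C \<le> W + 1" using K by linarith
  then show ?thesis using C0 by (simp add: pos_divide_le_eq algebra_simps)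
qed

lemma pol_in:
  assumes C0: "C > 0" and rt: "is_route Vp R"
    and y: "y \<in> policies N Vp C d R"
  shows "(\<forall>\<xi> v. (\<xi> \<notin> {1..N} \<or> v \<notin> Vp) \<longrightarrow> y \<xi> v = 0) \<and>
        (\<forall>\<xi>\<in>{1..N}. \<forall>v\<in>Vp. y \<xi> v \<ge> 0) \<and>
        (\<forall>\<xi>\<in>{1..N}. \<forall>R'\<in>subroutes R.
            sum (y \<xi>) (set R') \<ge> of_int (kcap C (d \<xi>) (set R')) - 1)"
proof -
  have dR: "distinct R" and sR: "set R \<subseteq> Vp" and ne: "R \<noteq> []" using rt by (auto simp: is_route_def)
  have A: "\<forall>\<xi> v. (\<xi> \<notin> {1..N} \<or> v \<notin> Vp) \<longrightarrow> y \<xi> v = 0" using y by (simp add: policies_def)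
  have B: "\<forall>v\<in>Vp. y \<xi> v \<ge> 0" if xi: "\<xi> \<in> {1..N}" for \<xi>
  proof -
    have ya: "y \<xi> \<in> recourse_actions Vp C (d \<xi>) R" using y xi by (simp add: policies_def)
    then show ?thesis by (simp add: recourse_actions_def)
  qed
  have D: "sum (y \<xi>) (set R') \<ge> of_int (kcap C (d \<xi>) (set R')) - 1"
    if xi: "\<xi> \<in> {1..N}" and R': "R' \<in> subroutes R" for \<xi> R'
  proof -
    have ya: "y \<xi> \<in> recourse_actions Vp C (d \<xi>) R" using y xi by (simp add: policies_def)
    obtain a j where aj: "a < j" "j \<le> length R" "R' = drop a (take j R)" using R' by (auto simp: subroutes_iff)
    have Yeq: "sum (y \<xi>) (set R') = (\<Sum>q\<in>{a..<j}. y \<xi> (R!q))" using aj dR by (simp add: sum_sub)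
    have Deq: "sum (d \<xi>) (set R') = (\<Sum>q\<in>{a..<j}. d \<xi> (R!q))" using aj dR by (simp add: sum_sub)
    have "(\<Sum>q\<in>{a..<j}. y \<xi> (R!q)) \<in> \<int>"
    proof (rule Ints_sum)
      fix q assume "q \<in> {a..<j}"
      then have "R!q \<in> Vp" using aj sR by auto
      then show "y \<xi> (R!q) \<in> \<int>" using ya by (simp add: recourse_actions_def)
    qed
    then obtain n where n: "sum (y \<xi>) (set R') = of_int n" using Yeq by (auto elim: Ints_cases)
    have "sum (d \<xi>) (set R') \<le> C + C * sum (y \<xi>) (set R')"
      using nec[OF dR sR ne ya aj(1,2)] Yeq Deq by simp
    then show ?thesis using kcap_int[OF C0 n] by simp
  qed
  show ?thesis using A B D by blast
qed

lemma conv_closed: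
  assumes c: "\<forall>i<m. c i \<ge> 0 \<and> (\<forall>\<xi> v. (\<xi> \<notin> {1..N} \<or> v \<notin> Vp) \<longrightarrow> p i \<xi> v = 0) \<and>
        (\<forall>\<xi>\<in>{1..N}. \<forall>v\<in>Vp. p i \<xi> v \<ge> 0) \<and>
        (\<forall>\<xi>\<in>{1..N}. \<forall>R'\<in>subroutes R.
            sum (p i \<xi>) (set R') \<ge> of_int (kcap C (d \<xi>) (set R')) - 1)"
    and s1: "(\<Sum>i<m. c i) = (1::real)"
    and y: "y = (\<lambda>\<xi> v. \<Sum>i<m. c i * p i \<xi> v)"
  shows "(\<forall>\<xi> v. (\<xi> \<notin> {1..N} \<or> v \<notin> Vp) \<longrightarrow> y \<xi> v = 0) \<and>
        (\<forall>\<xi>\<in>{1..N}. \<forall>v\<in>Vp. y \<xi> v \<ge> 0) \<and>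
        (\<forall>\<xi>\<in>{1..N}. \<forall>R'\<in>subroutes R.
            sum (y \<xi>) (set R') \<ge> of_int (kcap C (d \<xi>) (set R')) - 1)"
proof (intro conjI allI ballI impI)
  fix \<xi> v assume "\<xi> \<notin> {1..N} \<or> v \<notin> Vp"
  then show "y \<xi> v = 0" using c y by simp
next
  fix \<xi> v assume "\<xi> \<in> {1..N}" "v \<in> Vp"
  then show "y \<xi> v \<ge> 0" using c y by (auto intro!: sum_nonneg)
next
  fix \<xi> R' assume xi: "\<xi> \<in> {1..N}" and R': "R' \<in> subroutes R"
  let ?K = "of_int (kcap C (d \<xi>) (set R')) - (1::real)"
  have "sum (y \<xi>) (set R') = (\<Sum>i<m. c i * sum (p i \<xi>) (set R'))"
    unfolding y by (simp add: sum.swap[of _ "set R'"] sum_distrib_left)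
  also have "\<dots> \<ge> (\<Sum>i<m. c i * ?K)"
    using c xi R' by (intro sum_mono mult_left_mono) auto
  moreover have "(\<Sum>i<m. c i * ?K) = ?K" using s1 by (simp add: sum_distrib_right[symmetric])
  ultimately show "sum (y \<xi>) (set R') \<ge> ?K" by simp
qed


lemma part2:
  fixes Vp :: "'v set" and R :: "'v list" and y :: "nat \<Rightarrow> 'v \<Rightarrow> real"
  assumes fV: "finite Vp" and C0: "C > 0" and rt: "is_route Vp R"
    and d0: "\<forall>\<xi>\<in>{1..N}. \<forall>v\<in>Vp. 0 \<le> d \<xi> v"
    and y0: "\<forall>\<xi> v. (\<xi> \<notin> {1..N} \<or> v \<notin> Vp) \<longrightarrow> y \<xi> v = 0"
    and ypos: "\<forall>\<xi>\<in>{1..N}. \<forall>v\<in>Vp. y \<xi> v \<ge> 0"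
    and ysub: "\<forall>\<xi>\<in>{1..N}. \<forall>R'\<in>subroutes R.
            sum (y \<xi>) (set R') \<ge> of_int (kcap C (d \<xi>) (set R')) - 1"
  shows "y \<in> conv (policies N Vp C d R)"
proof -
  have dR: "distinct R" and sR: "set R \<subseteq> Vp" and ne: "R \<noteq> []" using rt by (auto simp: is_route_def)
  have Rin: "R!q \<in> Vp" if "q < length R" for q using that sR nth_mem by blast
  define P where "P \<xi> k = (\<Sum>q<k. y \<xi> (R!q))" for \<xi> k
  define X where "X = (\<lambda>(\<xi>, k). P \<xi> k) ` ({1..N} \<times> {..length R}) \<union> (\<lambda>(\<xi>, v). y \<xi> v) ` ({1..N} \<times> Vp)"
  define T where "T = insert 0 (frac ` X)"
  have finT: "finite T" using fV by (simp add: T_def X_def)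
  have T01: "T \<subseteq> {0..<1}" by (auto simp: T_def frac_lt_1)
  have T0: "0 \<in> T" by (simp add: T_def)
  have PT: "frac (P \<xi> k) \<in> T" if "\<xi> \<in> {1..N}" "k \<le> length R" for \<xi> k
    using that unfolding T_def X_def by (intro insertI2 imageI UnI1) (auto intro!: image_eqI[where x="(\<xi>, k)"])
  have yT: "frac (y \<xi> v) \<in> T" if "\<xi> \<in> {1..N}" "v \<in> Vp" for \<xi> v
    using that unfolding T_def X_def by (intro insertI2 imageI UnI2) (auto intro!: image_eqI[where x="(\<xi>, v)"])
  have PSuc: "P \<xi> (Suc q) = P \<xi> q + y \<xi> (R!q)" for \<xi> q by (simp add: P_def)
  define z where "z \<theta> \<xi> v = (if \<xi> \<in> {1..N} \<and> v \<in> Vp then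
      (if v \<in> set R then of_int \<lceil>P \<xi> (Suc (idx R v)) - \<theta>\<rceil> - of_int \<lceil>P \<xi> (idx R v) - \<theta>\<rceil>
       else of_int \<lceil>y \<xi> v - \<theta>\<rceil>) else (0::real))" for \<theta> \<xi> v
  have zR: "z \<theta> \<xi> (R!q) = of_int \<lceil>P \<xi> (Suc q) - \<theta>\<rceil> - of_int \<lceil>P \<xi> q - \<theta>\<rceil>"
    if "\<xi> \<in> {1..N}" "q < length R" for \<theta> \<xi> q
    using that Rin[OF that(2)] by (simp add: z_def idx_nth[OF dR])
  have zpol: "z \<theta> \<in> policies N Vp C d R" if th: "0 \<le> \<theta>" "\<theta> < 1" for \<theta>
    unfolding policies_def
  proof (intro CollectI conjI allI impI ballI)
    fix \<xi> v assume "\<xi> \<notin> {1..N} \<or> v \<notin> Vp"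
    then show "z \<theta> \<xi> v = 0" by (auto simp: z_def)
  next
    fix \<xi> assume xi: "\<xi> \<in> {1..N}"
    show "z \<theta> \<xi> \<in> recourse_actions Vp C (d \<xi>) R"
    proof (rule suf[OF dR sR C0])
      show "\<forall>v\<in>Vp. 0 \<le> d \<xi> v" using d0 xi by blast
      show "\<forall>v\<in>Vp. z \<theta> \<xi> v \<in> \<int> \<and> z \<theta> \<xi> v \<ge> 0"
      proof
        fix v assume v: "v \<in> Vp"
        show "z \<theta> \<xi> v \<in> \<int> \<and> z \<theta> \<xi> v \<ge> 0"
        proof (cases "v \<in> set R")
          case True
          then obtain q where q: "q < length R" "v = R!q" by (auto simp: in_set_conv_nth)
          have "P \<xi> q - \<theta> \<le> P \<xi> (Suc q) - \<theta>" using PSuc ypos xi Rin[OF q(1)] by simp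
          then have "\<lceil>P \<xi> q - \<theta>\<rceil> \<le> \<lceil>P \<xi> (Suc q) - \<theta>\<rceil>" by (rule ceiling_mono)
          then show ?thesis using zR[OF xi q(1)] q by simp
        next
          case False
          have "y \<xi> v \<ge> 0" using ypos xi v by blast
          then have "-1 < y \<xi> v - \<theta>" using th by linarith
          then show ?thesis using False xi v by (simp add: z_def)
        qed
      qed
      show "\<forall>a j. a < j \<longrightarrow> j \<le> length R \<longrightarrow>
        (\<Sum>q\<in>{a..<j}. d \<xi> (R!q)) \<le> C + C * (\<Sum>q\<in>{a..<j}. z \<theta> \<xi> (R!q))"
      proof (intro allI impI)
        fix a j :: nat assume aj: "a < j" "j \<le> length R"
        define G where "G q = real_of_int \<lceil>P \<xi> q - \<theta>\<rceil>" for q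
        have "(\<Sum>q\<in>{a..<j}. z \<theta> \<xi> (R!q)) = (\<Sum>q\<in>{a..<j}. G (Suc q) - G q)"
          using aj by (intro sum.cong) (auto simp: zR[OF xi] G_def)
        also have "\<dots> = G j - G a" using aj by (simp add: sum_Suc_diff')
        finally have Zeq: "(\<Sum>q\<in>{a..<j}. z \<theta> \<xi> (R!q)) = G j - G a" .
        define R' where "R' = drop a (take j R)"
        have R'sub: "R' \<in> subroutes R" using aj by (auto simp: subroutes_iff R'_def)
        define K where "K = kcap C (d \<xi>) (set R') - 1"
        have "sum (y \<xi>) (set R') = P \<xi> j - P \<xi> a"
          using aj dR by (simp add: R'_def sum_sub sum_ivl_diff P_def)
        moreover have "of_int (kcap C (d \<xi>) (set R')) - 1 \<le> sum (y \<xi>) (set R')" using ysub xi R'sub by blast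
        ultimately have "P \<xi> j - P \<xi> a \<ge> of_int K" by (simp add: K_def)
        then have "P \<xi> a - \<theta> + of_int K \<le> P \<xi> j - \<theta>" by simp
        then have "\<lceil>P \<xi> a - \<theta> + of_int K\<rceil> \<le> \<lceil>P \<xi> j - \<theta>\<rceil>" by (rule ceiling_mono)
        then have "\<lceil>P \<xi> a - \<theta>\<rceil> + K \<le> \<lceil>P \<xi> j - \<theta>\<rceil>" by simp
        then have "of_int K \<le> G j - G a" unfolding G_def by linarith
        then have "of_int (kcap C (d \<xi>) (set R')) - 1 \<le> G j - G a" by (simp add: K_def)
        from kcap_back[OF C0 this] show "(\<Sum>q\<in>{a..<j}. d \<xi> (R!q)) \<le> C + C * (\<Sum>q\<in>{a..<j}. z \<theta> \<xi> (R!q))"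
          using aj dR by (simp add: Zeq R'_def sum_sub)
      qed
    qed
  qed
  define c where "c t = nxt T t - t" for t
  have yrep: "y \<xi> v = (\<Sum>t\<in>T. c t * z t \<xi> v)" for \<xi> v
  proof (cases "\<xi> \<in> {1..N} \<and> v \<in> Vp")
    case False
    then show ?thesis using y0 by (auto simp: z_def)
  next
    case True
    then have xi: "\<xi> \<in> {1..N}" and v: "v \<in> Vp" by auto
    show ?thesis
    proof (cases "v \<in> set R")
      case True
      then obtain q where q: "q < length R" "v = R!q" by (auto simp: in_set_conv_nth)
      have "(\<Sum>t\<in>T. c t * z t \<xi> v) = (\<Sum>t\<in>T. (nxt T t - t) * of_int \<lceil>P \<xi> (Suc q) - t\<rceil>)
           - (\<Sum>t\<in>T. (nxt T t - t) * of_int \<lceil>P \<xi> q - t\<rceil>)"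
        unfolding sum_subtractf[symmetric] using q zR[OF xi q(1)] by (intro sum.cong) (simp_all add: c_def right_diff_distrib)
      also have "\<dots> = P \<xi> (Suc q) - P \<xi> q"
        using K2[OF finT T01 T0 PT[OF xi, of "Suc q"]] K2[OF finT T01 T0 PT[OF xi, of q]] q by simp
      finally show ?thesis using PSuc q by simp
    next
      case False
      have "(\<Sum>t\<in>T. c t * z t \<xi> v) = (\<Sum>t\<in>T. (nxt T t - t) * of_int \<lceil>y \<xi> v - t\<rceil>)"
        using False xi v by (simp add: z_def c_def)
      also have "\<dots> = y \<xi> v" using K2[OF finT T01 T0 yT[OF xi v]] .
      finally show ?thesis by simp
    qed
  qed
  obtain h where h: "bij_betw h {0..<card T} T" using ex_bij_betw_nat_finite[OF finT] by blast
  show ?thesis unfolding conv_def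
  proof (intro CollectI exI[of _ "card T"] exI[of _ "\<lambda>i. c (h i)"] exI[of _ "\<lambda>i. z (h i)"] conjI allI impI)
    fix i assume "i < card T"
    then have hi: "h i \<in> T" using h by (auto simp: bij_betw_def)
    then show "0 \<le> c (h i)" using nxt_ge[OF finT T01 hi] by (simp add: c_def)
    show "z (h i) \<in> policies N Vp C d R" using hi T01 by (intro zpol) auto
  next
    show "(\<Sum>i<card T. c (h i)) = 1"
      using sum.reindex_bij_betw[OF h, of c] K1sum[OF finT T01 T0] by (simp add: c_def lessThan_atLeast0)
  next
    show "y = (\<lambda>\<xi> v. \<Sum>i<card T. c (h i) * z (h i) \<xi> v)"
    proof (intro ext)
      fix \<xi> v
      show "y \<xi> v = (\<Sum>i<card T. c (h i) * z (h i) \<xi> v)"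
        using sum.reindex_bij_betw[OF h, of "\<lambda>t. c t * z t \<xi> v"] yrep[of \<xi> v] by (simp add: lessThan_atLeast0)
    qed
  qed
qed

theorem theorem2:
  fixes Vp :: "'v set" and N :: nat and C :: real
    and d :: "nat \<Rightarrow> 'v \<Rightarrow> real" and p :: "nat \<Rightarrow> real" and R :: "'v list"
  assumes "finite Vp"
    and "C \<in> \<rat>" and "C > 0"
    and "\<forall>\<xi>\<in>{1..N}. \<forall>v\<in>Vp. d \<xi> v \<in> \<rat> \<and> 0 \<le> d \<xi> v \<and> d \<xi> v \<le> C"
    and "\<forall>\<xi>\<in>{1..N}. p \<xi> \<in> \<rat> \<and> 0 \<le> p \<xi> \<and> p \<xi> \<le> 1"
    and "(\<Sum>\<xi>\<in>{1..N}. p \<xi>) = 1"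
    and "is_route Vp R"
  shows "conv (policies N Vp C d R) =
    {y. (\<forall>\<xi> v. (\<xi> \<notin> {1..N} \<or> v \<notin> Vp) \<longrightarrow> y \<xi> v = 0) \<and>
        (\<forall>\<xi>\<in>{1..N}. \<forall>v\<in>Vp. y \<xi> v \<ge> 0) \<and>
        (\<forall>\<xi>\<in>{1..N}. \<forall>R'\<in>subroutes R.
            sum (y \<xi>) (set R') \<ge> of_int (kcap C (d \<xi>) (set R')) - 1)}"
  proof (rule set_eqI)
  fix y
  have rt: "is_route Vp R" by fact
  show "y \<in> conv (policies N Vp C d R) \<longleftrightarrow> y \<in> {y. (\<forall>\<xi> v. (\<xi> \<notin> {1..N} \<or> v \<notin> Vp) \<longrightarrow> y \<xi> v = 0) \<and>
        (\<forall>\<xi>\<in>{1..N}. \<forall>v\<in>Vp. y \<xi> v \<ge> 0) \<and>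
        (\<forall>\<xi>\<in>{1..N}. \<forall>R'\<in>subroutes R.
            sum (y \<xi>) (set R') \<ge> of_int (kcap C (d \<xi>) (set R')) - 1)}"
  proof
    assume "y \<in> conv (policies N Vp C d R)"
    then have "\<exists>(m::nat) c p. (\<forall>i<m. c i \<ge> 0 \<and> p i \<in> policies N Vp C d R) \<and> (\<Sum>i<m. c i) = (1::real) \<and>
      y = (\<lambda>\<xi> v. \<Sum>i<m. c i * p i \<xi> v)" unfolding conv_def by (rule CollectD)
    then obtain m c p where cpall: "(\<forall>i<(m::nat). c i \<ge> 0 \<and> p i \<in> policies N Vp C d R) \<and> (\<Sum>i<m. c i) = (1::real) \<and>
      y = (\<lambda>\<xi> v. \<Sum>i<m. c i * p i \<xi> v)" by (elim exE)
    note cp = cpall[THEN conjunct1] cpall[THEN conjunct2, THEN conjunct1] cpall[THEN conjunct2, THEN conjunct2]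
    have "\<forall>i<m. c i \<ge> 0 \<and> (\<forall>\<xi> v. (\<xi> \<notin> {1..N} \<or> v \<notin> Vp) \<longrightarrow> p i \<xi> v = 0) \<and>
        (\<forall>\<xi>\<in>{1..N}. \<forall>v\<in>Vp. p i \<xi> v \<ge> 0) \<and>
        (\<forall>\<xi>\<in>{1..N}. \<forall>R'\<in>subroutes R.
            sum (p i \<xi>) (set R') \<ge> of_int (kcap C (d \<xi>) (set R')) - 1)"
    proof (intro allI impI)
      fix i assume "i < m"
      then have ci: "c i \<ge> 0" and pi: "p i \<in> policies N Vp C d R" using cp(1) by auto
      show "c i \<ge> 0 \<and> (\<forall>\<xi> v. (\<xi> \<notin> {1..N} \<or> v \<notin> Vp) \<longrightarrow> p i \<xi> v = 0) \<and>
        (\<forall>\<xi>\<in>{1..N}. \<forall>v\<in>Vp. p i \<xi> v \<ge> 0) \<and>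
        (\<forall>\<xi>\<in>{1..N}. \<forall>R'\<in>subroutes R.
            sum (p i \<xi>) (set R') \<ge> of_int (kcap C (d \<xi>) (set R')) - 1)"
        by (rule conjI[OF ci pol_in[OF assms(3) rt pi]])
    qed
    from conv_closed[OF this cp(2,3)] show "y \<in> {y. (\<forall>\<xi> v. (\<xi> \<notin> {1..N} \<or> v \<notin> Vp) \<longrightarrow> y \<xi> v = 0) \<and>
        (\<forall>\<xi>\<in>{1..N}. \<forall>v\<in>Vp. y \<xi> v \<ge> 0) \<and>
        (\<forall>\<xi>\<in>{1..N}. \<forall>R'\<in>subroutes R.
            sum (y \<xi>) (set R') \<ge> of_int (kcap C (d \<xi>) (set R')) - 1)}" by (simp only: mem_Collect_eq)
  next
    assume "y \<in> {y. (\<forall>\<xi> v. (\<xi> \<notin> {1..N} \<or> v \<notin> Vp) \<longrightarrow> y \<xi> v = 0) \<and>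
        (\<forall>\<xi>\<in>{1..N}. \<forall>v\<in>Vp. y \<xi> v \<ge> 0) \<and>
        (\<forall>\<xi>\<in>{1..N}. \<forall>R'\<in>subroutes R.
            sum (y \<xi>) (set R') \<ge> of_int (kcap C (d \<xi>) (set R')) - 1)}"
    then have Y: "(\<forall>\<xi> v. (\<xi> \<notin> {1..N} \<or> v \<notin> Vp) \<longrightarrow> y \<xi> v = 0) \<and>
        (\<forall>\<xi>\<in>{1..N}. \<forall>v\<in>Vp. y \<xi> v \<ge> 0) \<and>
        (\<forall>\<xi>\<in>{1..N}. \<forall>R'\<in>subroutes R.
            sum (y \<xi>) (set R') \<ge> of_int (kcap C (d \<xi>) (set R')) - 1)" by (rule CollectD)
    note yy = Y[THEN conjunct1] Y[THEN conjunct2, THEN conjunct1] Y[THEN conjunct2, THEN conjunct2]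
    have d0: "\<forall>\<xi>\<in>{1..N}. \<forall>v\<in>Vp. 0 \<le> d \<xi> v" using assms(4) by simp
    show "y \<in> conv (policies N Vp C d R)"
      by (rule part2[OF assms(1) assms(3) rt d0 yy])
  qed
qed

end
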